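(* Let $(X,d)$ be a pointed metric space and let $((x_i,y_i))_{i\in I}$ be a Lipschitz interpolating family in $\widetilde X$ for $\mathrm{Lip}_0(X)$ with Lipschitz interpolation constant $M$. Assume that $(f_i)_{i\in I}$ is a Beurling set of functions in $\mathrm{Lip}_0(X)$ for $((x_i,y_i))_{i\in I}$. Then for every $\alpha=(\alpha_i)_{i\in I}\in\ell_\infty(I)$ the series $\sum_{i\in I}\alpha_i f_i(x)$ converges for every $x\in X$, and the map $R:\ell_\infty(I)\to\mathrm{Lip}_0(X)$, $R(\alpha)=\sum_{i\in I}\alpha_i f_i$, is a well-defined bounded linear operator with $\|R\|=M$ and $T\circ R=\mathrm{Id}_{\ell_\infty(I)}$, where $T$ is the Lipschitz interpolating operator of the family.
   Context: All spaces are real. $(X,d)$ is a metric space with base point $0$, $\widetilde{X}=\{(x,y)\in X\times X: x\neq y\}$. $\mathrm{Lip}_0(X)$ is the Banach space of Lipschitz $f:X\to\mathbb{R}$ with $f(0)=0$, normed by $\|f\|=\sup_{(x,y)\in\widetilde X}|f(x)-f(y)|/d(x,y)$. For a family $((x_i,y_i))_{i\in I}$ in $\widetilde X$, its Lipschitz interpolating operator is $T:\mathrm{Lip}_0(X)\to\ell_\infty(I)$, $T(f)=\big((f(x_i)-f(y_i))/d(x_i,y_i)\big)_{i\in I}$; the family is Lipschitz interpolating for $\mathrm{Lip}_0(X)$ if $T$ is surjective, and then its Lipschitz interpolation constant is $M=\inf\{K\geq 1: \forall \alpha\in\ell_\infty(I), \|\alpha\|_\infty\le1,\ \exists f\in\mathrm{Lip}_0(X),\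 \|f\|\le K,\ T(f)=\alpha\}$. A Beurling set of functions in $\mathrm{Lip}_0(X)$ for such a family (with constant $M$) is a family $(f_i)_{i\in I}$ of functions $f_i:X\to\mathbb R$ with $f_i(0)=0$ for all $i$, $(f_i(x_j)-f_i(y_j))/d(x_j,y_j)=\delta_{ij}$ (Kronecker delta) for all $i,j\in I$, and $\sup_{(x,y)\in\widetilde X}\sum_{i\in I}|f_i(x)-f_i(y)|/d(x,y)\leq M$. *)

theory Defs
  imports "HOL-Analysis.Analysis"
begin

text \<open>Pointed metric space: the type 'a with its metric dist and a base point p.\<close>

definition lip0 :: "'a::metric_space \<Rightarrow> ('a \<Rightarrow> real) \<Rightarrow> bool" where
  "lip0 p f \<longleftrightarrow> f p = 0 \<and> (\<exists>K. \<forall>x y. \<bar>f x - f y\<bar> \<le> K * dist x y)"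

definition lip_norm :: "('a::metric_space \<Rightarrow> real) \<Rightarrow> real" where
  "lip_norm f = Sup (insert 0 {\<bar>f x - f y\<bar> / dist x y | x y. x \<noteq> y})"

definition linf :: "'i set \<Rightarrow> ('i \<Rightarrow> real) set" where
  "linf I = {a. (\<forall>i. i \<notin> I \<longrightarrow> a i = 0) \<and> bounded (a ` I)}"

definition sup_norm :: "'i set \<Rightarrow> ('i \<Rightarrow> real) \<Rightarrow> real" where
  "sup_norm I a = Sup (insert 0 ((\<lambda>i. \<bar>a i\<bar>) ` I))"

definition interp_op :: "'i set \<Rightarrow> ('i \<Rightarrow> 'a::metric_space) \<Rightarrow> ('i \<Rightarrow> 'a) \<Rightarrow> ('a \<Rightarrow> real) \<Rightarrow> ('i \<Rightarrow> real)" where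
  "interp_op I x y f = (\<lambda>i. if i \<in> I then (f (x i) - f (y i)) / dist (x i) (y i) else 0)"

definition lip_interpolating :: "'a::metric_space \<Rightarrow> 'i set \<Rightarrow> ('i \<Rightarrow> 'a) \<Rightarrow> ('i \<Rightarrow> 'a) \<Rightarrow> bool" where
  "lip_interpolating p I x y \<longleftrightarrow> (\<forall>i\<in>I. x i \<noteq> y i) \<and>
     (\<forall>\<alpha>\<in>linf I. \<exists>f. lip0 p f \<and> interp_op I x y f = \<alpha>)"

definition lip_interp_const :: "'a::metric_space \<Rightarrow> 'i set \<Rightarrow> ('i \<Rightarrow> 'a) \<Rightarrow> ('i \<Rightarrow> 'a) \<Rightarrow> real" where
  "lip_interp_const p I x y = Inf {K. K \<ge> 1 \<and> (\<forall>\<alpha>\<in>linf I. sup_norm I \<alpha> \<le> 1 \<longrightarrow>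
       (\<exists>f. lip0 p f \<and> lip_norm f \<le> K \<and> interp_op I x y f = \<alpha>))}"

definition beurling_set :: "'a::metric_space \<Rightarrow> 'i set \<Rightarrow> ('i \<Rightarrow> 'a) \<Rightarrow> ('i \<Rightarrow> 'a) \<Rightarrow> real
      \<Rightarrow> ('i \<Rightarrow> 'a \<Rightarrow> real) \<Rightarrow> bool" where
  "beurling_set p I x y M f \<longleftrightarrow>
     (\<forall>i\<in>I. f i p = 0) \<and>
     (\<forall>i\<in>I. \<forall>j\<in>I. (f i (x j) - f i (y j)) / dist (x j) (y j) = (if i = j then 1 else 0)) \<and>
     (\<forall>u v. u \<noteq> v \<longrightarrow>
        (\<lambda>i. \<bar>f i u - f i v\<bar> / dist u v) summable_on I \<and>
        (\<Sum>\<^sub>\<infinity>i\<in>I. \<bar>f i u - f i v\<bar> / dist u v) \<le> M)"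

end

theory Submission
  imports Defs
begin

lemma infsum_diff_real:
  fixes g h :: "'i \<Rightarrow> real"
  assumes "g summable_on A" "h summable_on A"
  shows "infsum (\<lambda>i. g i - h i) A = infsum g A - infsum h A"
proof -
  have "infsum (\<lambda>i. g i + - h i) A = infsum g A + infsum (\<lambda>i. - h i) A"
    by (rule infsum_add[OF assms(1) summable_on_uminus[THEN iffD2, OF assms(2)]])
  then show ?thesis by (simp add: infsum_uminus)
qed

lemma sup_norm_ge:
  assumes "a \<in> linf I" "i \<in> I"
  shows "\<bar>a i\<bar> \<le> sup_norm I a"
proof -
  from assms(1) have "bounded (a ` I)" by (simp add: linf_def)
  then obtain B where B: "\<forall>x\<in>a ` I. norm x \<le> B" by (auto simp: bounded_iff)
  have bdd: "bdd_above (insert 0 ((\<lambda>i. \<bar>a i\<bar>) ` I))"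
    using B by (intro bdd_aboveI[of _ "max 0 B"]) auto
  show ?thesis unfolding sup_norm_def
    by (rule cSup_upper[OF _ bdd]) (use assms(2) in auto)
qed

lemma sup_norm_nonneg:
  assumes "a \<in> linf I"
  shows "0 \<le> sup_norm I a"
proof -
  from assms(1) have "bounded (a ` I)" by (simp add: linf_def)
  then obtain B where B: "\<forall>x\<in>a ` I. norm x \<le> B" by (auto simp: bounded_iff)
  have bdd: "bdd_above (insert 0 ((\<lambda>i. \<bar>a i\<bar>) ` I))"
    using B by (intro bdd_aboveI[of _ "max 0 B"]) auto
  show ?thesis unfolding sup_norm_def
    by (rule cSup_upper[OF _ bdd]) auto
qed

lemma lip_norm_le:
  fixes g :: "'a::metric_space \<Rightarrow> real"
  assumes "0 \<le> K" "\<And>u v. u \<noteq> v \<Longrightarrow> \<bar>g u - g v\<bar> / dist u v \<le> K"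
  shows "lip_norm g \<le> K"
  unfolding lip_norm_def
  by (rule cSup_least) (use assms in auto)

lemma lip_norm_ge:
  fixes g :: "'a::metric_space \<Rightarrow> real"
  assumes "\<And>u v. u \<noteq> v \<Longrightarrow> \<bar>g u - g v\<bar> / dist u v \<le> K" "u \<noteq> v"
  shows "\<bar>g u - g v\<bar> / dist u v \<le> lip_norm g"
proof -
  have bdd: "bdd_above (insert 0 {\<bar>g x - g y\<bar> / dist x y | x y. x \<noteq> y})"
    using assms(1) by (intro bdd_aboveI[of _ "max 0 K"]) (auto intro: le_max_iff_disj[THEN iffD2])
  show ?thesis unfolding lip_norm_def
    by (rule cSup_upper[OF _ bdd]) (use assms(2) in auto)
qed

lemma diff_abs_summable:
  fixes f :: "'i \<Rightarrow> 'a::metric_space \<Rightarrow> real"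
  assumes S: "(\<lambda>i. \<bar>f i u - f i v\<bar> / dist u v) summable_on I" and uv: "u \<noteq> v"
    and a: "a \<in> linf I"
  shows "(\<lambda>i. a i * (f i u - f i v)) summable_on I"
    and "\<bar>infsum (\<lambda>i. a i * (f i u - f i v)) I\<bar>
          \<le> sup_norm I a * dist u v * infsum (\<lambda>i. \<bar>f i u - f i v\<bar> / dist u v) I"
proof -
  let ?B = "sup_norm I a" and ?d = "dist u v"
  have d: "?d > 0" using uv by simp
  have S2: "(\<lambda>i. ?B * ?d * (\<bar>f i u - f i v\<bar> / ?d)) summable_on I"
    by (rule summable_on_cmult_right[OF S])
  have eq: "?B * ?d * (\<bar>f i u - f i v\<bar> / ?d) = ?B * \<bar>f i u - f i v\<bar>" for i
    using d by simp
  have S3: "(\<lambda>i. ?B * \<bar>f i u - f i v\<bar>) summable_on I"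
    using S2 unfolding eq .
  have le: "norm (a i * (f i u - f i v)) \<le> norm (?B * \<bar>f i u - f i v\<bar>)" if "i \<in> I" for i
  proof -
    have "\<bar>a i\<bar> \<le> ?B" by (rule sup_norm_ge[OF a that])
    then have "\<bar>a i\<bar> * \<bar>f i u - f i v\<bar> \<le> ?B * \<bar>f i u - f i v\<bar>"
      by (rule mult_right_mono) simp
    then show ?thesis using sup_norm_nonneg[OF a] by (simp add: abs_mult)
  qed
  have AS: "(\<lambda>i. norm (a i * (f i u - f i v))) summable_on I"
    by (rule summable_on_comparison_test[OF S3]) (use le sup_norm_nonneg[OF a] in auto)
  then show "(\<lambda>i. a i * (f i u - f i v)) summable_on I"
    using summable_on_iff_abs_summable_on_real by blast
  have "\<bar>infsum (\<lambda>i. a i * (f i u - f i v)) I\<bar> \<le> infsum (\<lambda>i. norm (a i * (f i u - f i v))) I"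
    using norm_infsum_bound[OF AS] by simp
  also have "\<dots> \<le> infsum (\<lambda>i. ?B * \<bar>f i u - f i v\<bar>) I"
    by (rule infsum_mono[OF AS S3]) (use le sup_norm_nonneg[OF a] in auto)
  also have "\<dots> = infsum (\<lambda>i. ?B * ?d * (\<bar>f i u - f i v\<bar> / ?d)) I"
    unfolding eq ..
  also have "\<dots> = ?B * ?d * infsum (\<lambda>i. \<bar>f i u - f i v\<bar> / ?d) I"
    by (rule infsum_cmult_right) (use S in auto)
  finally show "\<bar>infsum (\<lambda>i. a i * (f i u - f i v)) I\<bar>
          \<le> sup_norm I a * dist u v * infsum (\<lambda>i. \<bar>f i u - f i v\<bar> / dist u v) I" .
qed


theorem theorem3p9:
  fixes p :: "'a::metric_space" and I :: "'i set"
    and x y :: "'i \<Rightarrow> 'a" and f :: "'i \<Rightarrow> 'a \<Rightarrow> real" and M :: real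
    and R :: "('i \<Rightarrow> real) \<Rightarrow> 'a \<Rightarrow> real"
  assumes "I \<noteq> {}"
    and "lip_interpolating p I x y"
    and "M = lip_interp_const p I x y"
    and "beurling_set p I x y M f"
    and "R = (\<lambda>\<alpha> z. \<Sum>\<^sub>\<infinity>i\<in>I. \<alpha> i * f i z)"
  shows "(\<forall>\<alpha>\<in>linf I. \<forall>z. (\<lambda>i. \<alpha> i * f i z) summable_on I)
    \<and> (\<forall>\<alpha>\<in>linf I. lip0 p (R \<alpha>))
    \<and> (\<forall>\<alpha>\<in>linf I. \<forall>\<beta>\<in>linf I. R (\<lambda>i. \<alpha> i + \<beta> i) = (\<lambda>z. R \<alpha> z + R \<beta> z))
    \<and> (\<forall>\<alpha>\<in>linf I. \<forall>c. R (\<lambda>i. c * \<alpha> i) = (\<lambda>z. c * R \<alpha> z))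
    \<and> (\<exists>C. \<forall>\<alpha>\<in>linf I. lip_norm (R \<alpha>) \<le> C * sup_norm I \<alpha>)
    \<and> Sup {lip_norm (R \<alpha>) | \<alpha>. \<alpha> \<in> linf I \<and> sup_norm I \<alpha> \<le> 1} = M
    \<and> (\<forall>\<alpha>\<in>linf I. interp_op I x y (R \<alpha>) = \<alpha>)"
proof -
  have f0: "\<And>i. i \<in> I \<Longrightarrow> f i p = 0"
    and delta: "\<And>i j. i \<in> I \<Longrightarrow> j \<in> I \<Longrightarrow>
        (f i (x j) - f i (y j)) / dist (x j) (y j) = (if i = j then 1 else 0)"
    and S: "\<And>u v. u \<noteq> v \<Longrightarrow> (\<lambda>i. \<bar>f i u - f i v\<bar> / dist u v) summable_on I"
    and SM: "\<And>u v. u \<noteq> v \<Longrightarrow> (\<Sum>\<^sub>\<infinity>i\<in>I. \<bar>f i u - f i v\<bar> / dist u v) \<le> M"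
  proof -
    have B: "(\<forall>i\<in>I. f i p = 0) \<and>
     (\<forall>i\<in>I. \<forall>j\<in>I. (f i (x j) - f i (y j)) / dist (x j) (y j) = (if i = j then 1 else 0)) \<and>
     (\<forall>u v. u \<noteq> v \<longrightarrow>
        (\<lambda>i. \<bar>f i u - f i v\<bar> / dist u v) summable_on I \<and>
        (\<Sum>\<^sub>\<infinity>i\<in>I. \<bar>f i u - f i v\<bar> / dist u v) \<le> M)"
      using assms(4) unfolding beurling_set_def .
    show "\<And>i. i \<in> I \<Longrightarrow> f i p = 0" using B by simp
    show "\<And>i j. i \<in> I \<Longrightarrow> j \<in> I \<Longrightarrow>
        (f i (x j) - f i (y j)) / dist (x j) (y j) = (if i = j then 1 else 0)"
      using conjunct1[OF conjunct2[OF B]] by simp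
    show "\<And>u v. u \<noteq> v \<Longrightarrow> (\<lambda>i. \<bar>f i u - f i v\<bar> / dist u v) summable_on I"
      using conjunct2[OF conjunct2[OF B]] by simp
    show "\<And>u v. u \<noteq> v \<Longrightarrow> (\<Sum>\<^sub>\<infinity>i\<in>I. \<bar>f i u - f i v\<bar> / dist u v) \<le> M"
      using conjunct2[OF conjunct2[OF B]] by simp
  qed
  have xy: "\<And>i. i \<in> I \<Longrightarrow> x i \<noteq> y i"
    using assms(2) unfolding lip_interpolating_def by blast
  obtain i0 where i0: "i0 \<in> I" using assms(1) by blast
  have M0: "0 \<le> M"
  proof -
    have "0 \<le> (\<Sum>\<^sub>\<infinity>i\<in>I. \<bar>f i (x i0) - f i (y i0)\<bar> / dist (x i0) (y i0))"
      by (rule infsum_nonneg) simp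
    then show ?thesis using SM[OF xy[OF i0]] by linarith
  qed
  have Rdef: "\<And>a z. R a z = (\<Sum>\<^sub>\<infinity>i\<in>I. a i * f i z)" using assms(5) by simp
  have summ: "(\<lambda>i. a i * f i z) summable_on I" if a: "a \<in> linf I" for a z
  proof (cases "z = p")
    case True
    then show ?thesis by (subst summable_on_cong[where g = "\<lambda>_. 0"]) (auto simp: f0)
  next
    case False
    have "(\<lambda>i. a i * (f i z - f i p)) summable_on I"
      by (rule diff_abs_summable(1)[OF S[OF False] False a])
    then show ?thesis by (subst summable_on_cong[where g = "\<lambda>i. a i * (f i z - f i p)"]) (auto simp: f0)
  qed
  have Rdiff: "R a u - R a v = (\<Sum>\<^sub>\<infinity>i\<in>I. a i * (f i u - f i v))" if a: "a \<in> linf I" for a u v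
  proof -
    have "(\<Sum>\<^sub>\<infinity>i\<in>I. a i * (f i u - f i v)) = (\<Sum>\<^sub>\<infinity>i\<in>I. a i * f i u - a i * f i v)"
      by (simp add: right_diff_distrib)
    also have "\<dots> = R a u - R a v"
      unfolding Rdef by (rule infsum_diff_real[OF summ[OF a] summ[OF a]])
    finally show ?thesis by simp
  qed
  have bound: "\<bar>R a u - R a v\<bar> \<le> sup_norm I a * M * dist u v" if a: "a \<in> linf I" for a u v
  proof (cases "u = v")
    case True then show ?thesis by simp
  next
    case False
    have "\<bar>R a u - R a v\<bar> \<le> sup_norm I a * dist u v * infsum (\<lambda>i. \<bar>f i u - f i v\<bar> / dist u v) I"
      unfolding Rdiff[OF a] by (rule diff_abs_summable(2)[OF S[OF False] False a])
    also have "\<dots> \<le> sup_norm I a * dist u v * M"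
      by (rule mult_left_mono[OF SM[OF False]]) (use sup_norm_nonneg[OF a] in simp)
    finally show ?thesis by (simp add: mult_ac)
  qed
  have ratio: "\<bar>R a u - R a v\<bar> / dist u v \<le> sup_norm I a * M" if a: "a \<in> linf I" and "u \<noteq> v" for a u v
    using bound[OF a, of u v] that(2) by (simp add: divide_le_eq)
  have lip: "lip0 p (R a)" if a: "a \<in> linf I" for a
    unfolding lip0_def
  proof
    show "R a p = 0" unfolding Rdef by (rule infsum_0) (simp add: f0)
    show "\<exists>K. \<forall>u v. \<bar>R a u - R a v\<bar> \<le> K * dist u v"
      using bound[OF a] by blast
  qed
  have lipn: "lip_norm (R a) \<le> M * sup_norm I a" if a: "a \<in> linf I" for a
  proof (rule lip_norm_le)
    show "0 \<le> M * sup_norm I a" using M0 sup_norm_nonneg[OF a] by simp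
    fix u v :: 'a assume "u \<noteq> v"
    then show "\<bar>R a u - R a v\<bar> / dist u v \<le> M * sup_norm I a"
      using ratio[OF a, of u v] by (simp add: mult.commute)
  qed
  have interp: "interp_op I x y (R a) = a" if a: "a \<in> linf I" for a
  proof
    fix i
    show "interp_op I x y (R a) i = a i"
    proof (cases "i \<in> I")
      case False
      then show ?thesis using a by (simp add: interp_op_def linf_def)
    next
      case True
      have d: "dist (x i) (y i) > 0" using xy[OF True] by simp
      have "(\<Sum>\<^sub>\<infinity>j\<in>I. a j * (f j (x i) - f j (y i))) = (\<Sum>\<^sub>\<infinity>j\<in>{i}. a j * dist (x i) (y i))"
      proof (rule infsum_cong_neutral)
        fix j assume j: "j \<in> I - {i}"
        have "(f j (x i) - f j (y i)) / dist (x i) (y i) = 0" using delta[of j i] j True by auto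
        then show "a j * (f j (x i) - f j (y i)) = 0" using d by simp
      next
        fix j assume j: "j \<in> I \<inter> {i}"
        have "(f j (x i) - f j (y i)) / dist (x i) (y i) = 1" using delta[of j i] j True by auto
        then show "a j * (f j (x i) - f j (y i)) = a j * dist (x i) (y i)" using d by (simp add: divide_eq_eq)
      qed (use True in auto)
      also have "\<dots> = a i * dist (x i) (y i)" by simp
      finally show ?thesis using True d Rdiff[OF a, of "x i" "y i"] by (simp add: interp_op_def)
    qed
  qed
  have add: "R (\<lambda>i. a i + b i) = (\<lambda>z. R a z + R b z)" if a: "a \<in> linf I" and b: "b \<in> linf I" for a b
  proof
    fix z
    have "R (\<lambda>i. a i + b i) z = (\<Sum>\<^sub>\<infinity>i\<in>I. a i * f i z + b i * f i z)"
      unfolding Rdef by (simp add: distrib_right)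
    also have "\<dots> = R a z + R b z" unfolding Rdef by (rule infsum_add[OF summ[OF a] summ[OF b]])
    finally show "R (\<lambda>i. a i + b i) z = R a z + R b z" .
  qed
  have smul: "R (\<lambda>i. c * a i) = (\<lambda>z. c * R a z)" if a: "a \<in> linf I" for a c
  proof
    fix z
    have "R (\<lambda>i. c * a i) z = (\<Sum>\<^sub>\<infinity>i\<in>I. c * (a i * f i z))"
      unfolding Rdef by (simp add: mult_ac)
    also have "\<dots> = c * R a z" unfolding Rdef by (rule infsum_cmult_right) (use summ[OF a] in auto)
    finally show "R (\<lambda>i. c * a i) z = c * R a z" .
  qed
  define e where "e = (\<lambda>j. if j = i0 then 1 else 0 :: real)"
  have e: "e \<in> linf I"
  proof -
    have "e ` I \<subseteq> {0, 1}" by (auto simp: e_def)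
    then have "bounded (e ` I)" by (meson bounded_subset finite.emptyI finite.insertI finite_imp_bounded)
    then show ?thesis unfolding linf_def using i0 by (auto simp: e_def)
  qed
  have e1: "sup_norm I e \<le> 1"
    unfolding sup_norm_def by (rule cSup_least) (auto simp: e_def)
  define SS where "SS = {lip_norm (R \<alpha>) | \<alpha>. \<alpha> \<in> linf I \<and> sup_norm I \<alpha> \<le> 1}"
  have SSle: "s \<le> M" if sS: "s \<in> SS" for s
  proof -
    obtain a where a: "a \<in> linf I" "sup_norm I a \<le> 1" "s = lip_norm (R a)"
      using sS unfolding SS_def by blast
    have "M * sup_norm I a \<le> M" using M0 a(2) by (simp add: mult_left_le)
    then show ?thesis using lipn[OF a(1)] a(3) by linarith
  qed
  have SSne: "lip_norm (R e) \<in> SS" unfolding SS_def using e e1 by blast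
  have bddS: "bdd_above SS" using SSle by (rule bdd_aboveI[of _ M])
  have le1: "Sup SS \<le> M" by (rule cSup_least) (use SSne SSle in auto)
  have one: "1 \<le> lip_norm (R e)"
  proof -
    have "\<bar>R e (x i0) - R e (y i0)\<bar> / dist (x i0) (y i0) \<le> lip_norm (R e)"
      by (rule lip_norm_ge[OF ratio[OF e] xy[OF i0]])
    moreover have "(R e (x i0) - R e (y i0)) / dist (x i0) (y i0) = 1"
    proof -
      have h1: "interp_op I x y (R e) i0 = e i0" using interp[OF e] by simp
      have h2: "e i0 = 1" by (simp add: e_def)
      show ?thesis using h1 h2 i0 unfolding interp_op_def by metis
    qed
    moreover have "\<bar>R e (x i0) - R e (y i0)\<bar> / dist (x i0) (y i0)
        = \<bar>(R e (x i0) - R e (y i0)) / dist (x i0) (y i0)\<bar>" by (simp add: abs_divide)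
    ultimately show ?thesis by simp
  qed
  have sge1: "1 \<le> Sup SS" using one cSup_upper[OF SSne bddS] by linarith
  define KS where "KS = {K. K \<ge> 1 \<and> (\<forall>\<alpha>\<in>linf I. sup_norm I \<alpha> \<le> 1 \<longrightarrow>
       (\<exists>g. lip0 p g \<and> lip_norm g \<le> K \<and> interp_op I x y g = \<alpha>))}"
  have "Sup SS \<in> KS"
    unfolding KS_def
  proof (intro CollectI conjI ballI impI sge1)
    fix a assume a: "a \<in> linf I" "sup_norm I a \<le> 1"
    have "lip_norm (R a) \<le> Sup SS" by (rule cSup_upper[OF _ bddS]) (use a in \<open>auto simp: SS_def\<close>)
    then show "\<exists>g. lip0 p g \<and> lip_norm g \<le> Sup SS \<and> interp_op I x y g = a"
      using lip[OF a(1)] interp[OF a(1)] by blast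
  qed
  moreover have "bdd_below KS" unfolding KS_def by (rule bdd_belowI[of _ 1]) auto
  ultimately have "Inf KS \<le> Sup SS" by (rule cInf_lower)
  then have le2: "M \<le> Sup SS" using assms(3) unfolding lip_interp_const_def KS_def by simp
  have supeq: "Sup SS = M" using le1 le2 by linarith
  show ?thesis
  proof (intro conjI)
    show "\<forall>\<alpha>\<in>linf I. \<forall>z. (\<lambda>i. \<alpha> i * f i z) summable_on I" using summ by blast
    show "\<forall>\<alpha>\<in>linf I. lip0 p (R \<alpha>)" using lip by blast
    show "\<forall>\<alpha>\<in>linf I. \<forall>\<beta>\<in>linf I. R (\<lambda>i. \<alpha> i + \<beta> i) = (\<lambda>z. R \<alpha> z + R \<beta> z)"
      using add by blast
    show "\<forall>\<alpha>\<in>linf I. \<forall>c. R (\<lambda>i. c * \<alpha> i) = (\<lambda>z. c * R \<alpha> z)" using smul by blast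
    show "\<exists>C. \<forall>\<alpha>\<in>linf I. lip_norm (R \<alpha>) \<le> C * sup_norm I \<alpha>" using lipn by blast
    show "Sup {lip_norm (R \<alpha>) | \<alpha>. \<alpha> \<in> linf I \<and> sup_norm I \<alpha> \<le> 1} = M"
      using supeq unfolding SS_def .
    show "\<forall>\<alpha>\<in>linf I. interp_op I x y (R \<alpha>) = \<alpha>" using interp by blast
  qed
qed

end
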